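(* Let $\mathcal{N}=\{1,\dots,N\}$ and let $u:2^{\mathcal{N}}\times\Delta\to\mathbb{R}$ be an uncertain value function, where the value $u(\mathcal{N})$ of the grand coalition does not depend on $\delta$. Let $\delta_K=\{\delta^{(1)},\dots,\delta^{(K)}\}$ be $K$ i.i.d. samples drawn from $\Delta$ according to $\mathbb{P}$, and assume that for every multi-sample $\delta_K\in\Delta^K$ the scenario core $C(G_K)$ is non-empty. Fix a confidence parameter $\beta\in(0,1)$ and let $\epsilon:\{0,\dots,K\}\to[0,1]$ be any function such that $$\epsilon(K)=1\quad\text{and}\quad \sum_{s=0}^{K-1}\binom{K}{s}(1-\epsilon(s))^{K-s}=\beta .$$ Then $$\mathbb{P}^K\left\{\delta_K\in\Delta^K \;\middle|\; \mathbb{V}(C(G_K))>\epsilon(s_K)\right\}\le\beta,$$ where $\mathbb{P}^K=\prod_{k=1}^K\mathbb{P}$ and $s_K$ is the cardinality of a minimal compression set of the algorithm $A$ for the multi-sample $\delta_K$.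
   Context: An uncertain cooperative game has agents $\mathcal{N}=\{1,\dots,N\}$, an uncertain parameter $\delta$ taking values in a set $\Delta$ according to a (fixed, possibly unknown) probability distribution $\mathbb{P}$, and a value function $u:2^{\mathcal{N}}\times\Delta\to\mathbb{R}$; an allocation is a vector $\boldsymbol{x}=(x_1,\dots,x_N)\in\mathbb{R}^N$. Given samples $\delta_K=\{\delta^{(1)},\dots,\delta^{(K)}\}$, the scenario core is $$C(G_K)=\Big\{\boldsymbol{x}\in\mathbb{R}^N \,\Big|\, \textstyle\sum_{i\in\mathcal{N}}x_i=u(\mathcal{N}),\ \sum_{i\in S}x_i\ge \max_{k=1,\dots,K}u(S,\delta^{(k)})\ \text{for all } S\subsetneq\mathcal{N}\Big\}.$$ The probability of core instability of the scenario core is $$\mathbb{V}(C(G_K))=\mathbb{P}\Big\{\delta\in\Delta \,\Big|\, \exists\,\boldsymbol{x}\in C(G_K),\ \exists\, S\subsetneq\mathcal{N}:\ \textstyle\sum_{i\in S}x_i<u(S,\delta)\Big\}.$$ The algorithm $A$ is the map taking a finite collection of samples to the scenario core built from those samples; in particular $A(\delta_K)=C(G_K)$. A subset $I\subseteq\delta_K$ is a compression set if $A(I)=A(\delta_K)$ (i.e., the scenario core built from the samples in $I$ alone equals $C(G_K)$); a minimal compression set is a compression set of minimal cardinality. *)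

theory Defs
  imports "HOL-Probability.Probability"
begin

text \<open>Agents are \<open>{1..N}\<close>; coalitions are subsets of \<open>{1..N}\<close>; an allocation is a
  function \<open>x :: nat \<Rightarrow> real\<close> (only its values on \<open>{1..N}\<close> matter).
  \<open>vN\<close> is the (deterministic) value \<open>u(\<N>)\<close> of the grand coalition.
  A finite collection of samples is represented by the set \<open>D\<close> of its values.\<close>

definition scenario_core ::
  "nat \<Rightarrow> (nat set \<Rightarrow> 'd \<Rightarrow> real) \<Rightarrow> real \<Rightarrow> 'd set \<Rightarrow> (nat \<Rightarrow> real) set" where
  "scenario_core N u vN D =
     {x. (\<Sum>i\<in>{1..N}. x i) = vN \<and>
         (\<forall>S. S \<subset> {1..N} \<longrightarrow> (\<forall>d\<in>D. (\<Sum>i\<in>S. x i) \<ge> u S d))}"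

definition instability ::
  "'d measure \<Rightarrow> nat \<Rightarrow> (nat set \<Rightarrow> 'd \<Rightarrow> real) \<Rightarrow> (nat \<Rightarrow> real) set \<Rightarrow> real" where
  "instability M N u C =
     measure M {d \<in> space M. \<exists>x\<in>C. \<exists>S. S \<subset> {1..N} \<and> (\<Sum>i\<in>S. x i) < u S d}"

text \<open>Cardinality of a minimal compression set of the algorithm
  \<open>A = scenario_core N u vN\<close> for the multi-sample \<open>\<omega> 0, \<dots>, \<omega> (K-1)\<close>.\<close>
definition min_compression_card ::
  "nat \<Rightarrow> (nat set \<Rightarrow> 'd \<Rightarrow> real) \<Rightarrow> real \<Rightarrow> nat \<Rightarrow> (nat \<Rightarrow> 'd) \<Rightarrow> nat" where
  "min_compression_card N u vN K \<omega> =
     Min {card I | I. I \<subseteq> \<omega> ` {..<K} \<and>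
                      scenario_core N u vN I = scenario_core N u vN (\<omega> ` {..<K})}"

end

theory Submission
  imports Defs
begin


lemma compact_box:
  fixes a b :: "nat \<Rightarrow> real"
  shows "compact (PiE UNIV (\<lambda>i. if i \<in> A then {a i..b i} else {0::real}))"
proof -
  have "compactin (product_topology (\<lambda>i. euclidean) UNIV) (PiE UNIV (\<lambda>i. if i \<in> A then {a i..b i} else {0::real}))"
    by (subst compactin_PiE) auto
  then show ?thesis by (simp add: euclidean_product_topology)
qed

lemma cont_sum: "continuous_on UNIV (\<lambda>x::nat\<Rightarrow>real. \<Sum>i\<in>T. x i)"
  by (intro continuous_intros) simp

lemma le_lim: fixes a b :: real assumes "\<forall>n::nat. a \<le> b + 1/(real n+1)" shows "a \<le> b"
proof (rule ccontr)
  assume "\<not> a \<le> b"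
  then obtain n::nat where n: "n > 0" "inverse (real n) < a - b"
    using ex_inverse_of_nat_less[of "a-b"] by auto
  have "1/(real n + 1) \<le> inverse (real n)" using n(1) by (simp add: field_simps)
  then show False using assms[rule_format, of n] n by linarith
qed

definition Qvec :: "nat \<Rightarrow> (nat \<Rightarrow> real) set" where
  "Qvec N = {q. (\<forall>i. q i \<in> \<rat>) \<and> (\<forall>i. i \<notin> {1..N} \<longrightarrow> q i = 0)}"

definition apx :: "nat \<Rightarrow> (nat set \<Rightarrow> 'd \<Rightarrow> real) \<Rightarrow> real \<Rightarrow> 'd set \<Rightarrow> nat set \<Rightarrow> nat \<Rightarrow> real \<Rightarrow> (nat \<Rightarrow> real) \<Rightarrow> bool" where
  "apx N u vN D S n r' q \<longleftrightarrow> \<bar>(\<Sum>i\<in>{1..N}. q i) - vN\<bar> \<le> 1/(real n+1) \<and>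
     (\<forall>T. T \<subset> {1..N} \<longrightarrow> (\<forall>d\<in>D. u T d \<le> (\<Sum>i\<in>T. q i) + 1/(real n+1))) \<and> (\<Sum>i\<in>S. q i) \<le> r'"

lemma countable_Qvec: "countable (Qvec N)"
proof -
  have "Qvec N \<subseteq> (\<lambda>f i. if i \<in> {1..N} then f i else 0) ` (PiE {1..N} (\<lambda>_. \<rat>))"
  proof
    fix q assume q: "q \<in> Qvec N"
    then have "q = (\<lambda>i. if i \<in> {1..N} then restrict q {1..N} i else 0)"
      by (auto simp: Qvec_def)
    moreover have "restrict q {1..N} \<in> PiE {1..N} (\<lambda>_. \<rat>)" using q by (auto simp: Qvec_def)
    ultimately show "q \<in> (\<lambda>f i. if i \<in> {1..N} then f i else 0) ` (PiE {1..N} (\<lambda>_. \<rat>))" by blast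
  qed
  moreover have "countable (PiE {1..N} (\<lambda>_. \<rat>::real set))"
    by (intro countable_PiE) (auto simp: countable_rat)
  ultimately show ?thesis by (meson countable_image countable_subset)
qed

lemma sum_approx:
  fixes x q :: "nat \<Rightarrow> real"
  assumes "T \<subseteq> {1..N}" "\<And>i. i \<in> {1..N} \<Longrightarrow> \<bar>q i - x i\<bar> \<le> \<delta>" "0 \<le> \<delta>"
  shows "\<bar>(\<Sum>i\<in>T. q i) - (\<Sum>i\<in>T. x i)\<bar> \<le> real N * \<delta>"
proof -
  have fin: "finite T" using assms(1) finite_subset by blast
  have "\<bar>(\<Sum>i\<in>T. q i) - (\<Sum>i\<in>T. x i)\<bar> = \<bar>\<Sum>i\<in>T. q i - x i\<bar>" by (simp add: sum_subtractf)
  also have "\<dots> \<le> (\<Sum>i\<in>T. \<bar>q i - x i\<bar>)" by (rule sum_abs)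
  also have "\<dots> \<le> (\<Sum>i\<in>T. \<delta>)" using assms by (intro sum_mono) auto
  also have "\<dots> = real (card T) * \<delta>" by simp
  also have "\<dots> \<le> real N * \<delta>"
  proof -
    have "card T \<le> N" using card_mono[OF _ assms(1)] by simp
    then show ?thesis using assms(3) by (intro mult_right_mono) auto
  qed
  finally show ?thesis .
qed

lemma core_approx_fwd:
  assumes x: "x \<in> scenario_core N u vN D" and S: "S \<subseteq> {1..N}" and xr: "(\<Sum>i\<in>S. x i) < r"
  shows "\<exists>r'\<in>\<rat>. r' < r \<and> (\<forall>n::nat. \<exists>q\<in>Qvec N. apx N u vN D S n r' q)"
proof -
  obtain r' where r': "r' \<in> \<rat>" "(\<Sum>i\<in>S. x i) < r'" "r' < r" using Rats_dense_in_real[OF xr] by blast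
  have "\<exists>q\<in>Qvec N. apx N u vN D S n r' q" for n :: nat
  proof -
    define e where "e = min (1/(real n+1)) (r' - (\<Sum>i\<in>S. x i))"
    have e: "0 < e" using r' by (simp add: e_def)
    define \<delta> where "\<delta> = e / (real N + 1)"
    have \<delta>: "0 < \<delta>" using e by (simp add: \<delta>_def)
    have Nd: "real N * \<delta> < e" using e by (simp add: \<delta>_def field_simps)
    have "\<forall>i. \<exists>g\<in>\<rat>. x i - \<delta> < g \<and> g < x i + \<delta>"
    proof
      fix i have "x i - \<delta> < x i + \<delta>" using \<delta> by simp
      from Rats_dense_in_real[OF this] show "\<exists>g\<in>\<rat>. x i - \<delta> < g \<and> g < x i + \<delta>" by blast
    qed
    then obtain g where g: "\<And>i. g i \<in> \<rat>" "\<And>i. x i - \<delta> < g i \<and> g i < x i + \<delta>" by metis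
    define q where "q i = (if i \<in> {1..N} then g i else 0)" for i
    have qQ: "q \<in> Qvec N" using g(1) by (auto simp: Qvec_def q_def)
    have qx: "\<bar>q i - x i\<bar> \<le> \<delta>" if "i \<in> {1..N}" for i using g(2)[of i] that by (auto simp: q_def abs_le_iff)
    have sa: "\<bar>(\<Sum>i\<in>T. q i) - (\<Sum>i\<in>T. x i)\<bar> < e" if "T \<subseteq> {1..N}" for T
      using sum_approx[OF that qx] \<delta> Nd by (meson less_eq_real_def order_le_less_trans)
    have xc: "(\<Sum>i\<in>{1..N}. x i) = vN" "\<And>T d. T \<subset> {1..N} \<Longrightarrow> d \<in> D \<Longrightarrow> u T d \<le> (\<Sum>i\<in>T. x i)"
      using x by (auto simp: scenario_core_def)
    have e1: "e \<le> 1/(real n+1)" "e \<le> r' - (\<Sum>i\<in>S. x i)" by (auto simp: e_def)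
    have "apx N u vN D S n r' q"
      unfolding apx_def
    proof (intro conjI allI impI ballI)
      show "\<bar>(\<Sum>i\<in>{1..N}. q i) - vN\<bar> \<le> 1/(real n+1)" using sa[of "{1..N}"] xc(1) e1 by simp
      show "(\<Sum>i\<in>S. q i) \<le> r'" using sa[OF S] e1 by (simp add: abs_less_iff)
      fix T d assume T: "T \<subset> {1..N}" and d: "d \<in> D"
      show "u T d \<le> (\<Sum>i\<in>T. q i) + 1/(real n+1)"
        using sa[of T] T xc(2)[OF T d] e1 by (auto simp: abs_less_iff)
    qed
    then show ?thesis using qQ by blast
  qed
  then show ?thesis using r' by blast
qed

lemma core_approx_bwd:
  assumes D: "d0 \<in> D" and r': "r' < r"
    and ap: "\<forall>n::nat. \<exists>q\<in>Qvec N. apx N u vN D S n r' q"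
  shows "\<exists>x\<in>scenario_core N u vN D. (\<Sum>i\<in>S. x i) < r"
proof -
  define a where "a i = min (u {i} d0) vN - 1" for i
  define b where "b i = vN + 2 - u ({1..N} - {i}) d0" for i
  define B where "B = PiE UNIV (\<lambda>i. if i \<in> {1..N} then {a i..b i} else {0::real})"
  define F where "F n = {x::nat\<Rightarrow>real. \<bar>(\<Sum>i\<in>{1..N}. x i) - vN\<bar> \<le> 1/(real n+1)} \<inter>
     (\<Inter>T\<in>{T. T \<subset> {1..N}}. \<Inter>d\<in>D. {x. u T d \<le> (\<Sum>i\<in>T. x i) + 1/(real n+1)}) \<inter>
     {x. (\<Sum>i\<in>S. x i) \<le> r'}" for n :: nat
  have cB: "compact B" unfolding B_def by (rule compact_box)
  have cF: "closed (F n)" for n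
    unfolding F_def
    by (intro closed_Int closed_INT ballI closed_Collect_le cont_sum continuous_on_const continuous_on_add continuous_on_rabs continuous_on_diff)
  have apF: "q \<in> F n" if "apx N u vN D S n r' q" for q n
    using that by (auto simp: apx_def F_def)
  have Fmono: "F m \<subseteq> F n" if "n \<le> m" for m n
  proof -
    have "1/(real m+1) \<le> 1/(real n+1)" using that by (simp add: frac_le)
    then show ?thesis unfolding F_def
    proof (intro subsetI IntI)
      fix x assume h: "1/(real m+1) \<le> 1/(real n+1)" and
        x: "x \<in> {x. \<bar>(\<Sum>i\<in>{1..N}. x i) - vN\<bar> \<le> 1/(real m+1)} \<inter>
     (\<Inter>T\<in>{T. T \<subset> {1..N}}. \<Inter>d\<in>D. {x. u T d \<le> (\<Sum>i\<in>T. x i) + 1/(real m+1)}) \<inter>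
     {x. (\<Sum>i\<in>S. x i) \<le> r'}"
      then show "x \<in> {x. \<bar>(\<Sum>i\<in>{1..N}. x i) - vN\<bar> \<le> 1/(real n+1)}" by auto
      show "x \<in> (\<Inter>T\<in>{T. T \<subset> {1..N}}. \<Inter>d\<in>D. {x. u T d \<le> (\<Sum>i\<in>T. x i) + 1/(real n+1)})"
      proof (intro INT_I CollectI)
        fix T d assume "T \<in> {T. T \<subset> {1..N}}" "d \<in> D"
        then have "u T d \<le> (\<Sum>i\<in>T. x i) + 1/(real m+1)" using x by blast
        then show "u T d \<le> (\<Sum>i\<in>T. x i) + 1/(real n+1)" using h by linarith
      qed
      show "x \<in> {x. (\<Sum>i\<in>S. x i) \<le> r'}" using x by blast
    qed
  qed
  have qB: "q \<in> B" if q: "q \<in> Qvec N" "apx N u vN D S n r' q" for q n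
  proof -
    have e: "1/(real n+1) \<le> 1" by (simp add: field_simps)
    have ap1: "\<bar>(\<Sum>i\<in>{1..N}. q i) - vN\<bar> \<le> 1/(real n+1)"
      using q(2) unfolding apx_def by blast
    have ap2: "u T d0 \<le> (\<Sum>i\<in>T. q i) + 1/(real n+1)" if "T \<subset> {1..N}" for T
      using q(2) D that unfolding apx_def by blast
    have qi: "q i \<in> {a i..b i}" if i: "i \<in> {1..N}" for i
    proof -
      have spl: "(\<Sum>i\<in>{1..N}. q i) = q i + (\<Sum>j\<in>{1..N}-{i}. q j)"
        using i by (intro sum.remove) auto
      have "u ({1..N} - {i}) d0 \<le> (\<Sum>j\<in>{1..N}-{i}. q j) + 1/(real n+1)"
        using i by (intro ap2 psubsetI Diff_subset) blast
      then have up: "q i \<le> b i" using spl ap1 e unfolding b_def abs_le_iff by linarith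
      have lo: "a i \<le> q i"
      proof (cases "{i} \<subset> {1..N}")
        case True
        have "u {i} d0 \<le> q i + 1/(real n+1)" using ap2[OF True] by simp
        then show ?thesis using e unfolding a_def by linarith
      next
        case False
        have "{i} \<subseteq> {1..N}" using i by blast
        then have "{1..N} = {i}" using False by blast
        then have "(\<Sum>i\<in>{1..N}. q i) = q i" by simp
        then show ?thesis using ap1 e unfolding a_def abs_le_iff by linarith
      qed
      show ?thesis using up lo by simp
    qed
    have q0: "q i = 0" if "i \<notin> {1..N}" for i using q(1) that unfolding Qvec_def by blast
    show ?thesis unfolding B_def PiE_UNIV_domain using qi q0 by auto
  qed
  have "B \<inter> (\<Inter>n\<in>UNIV. F n) \<noteq> {}"
  proof (rule compact_imp_fip_image[OF cB cF])
    fix I' :: "nat set" assume "finite I'"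
    define m where "m = Max (insert 0 I')"
    have mI: "n \<le> m" if "n \<in> I'" for n using \<open>finite I'\<close> that by (simp add: m_def)
    obtain q where q: "q \<in> Qvec N" "apx N u vN D S m r' q" using ap by blast
    have "q \<in> B \<inter> (\<Inter>n\<in>I'. F n)" using qB[OF q] apF[OF q(2)] Fmono mI by blast
    then show "B \<inter> (\<Inter>n\<in>I'. F n) \<noteq> {}" by blast
  qed
  then obtain x where x: "\<And>n. x \<in> F n" by blast
  have h: "\<bar>(\<Sum>i\<in>{1..N}. x i) - vN\<bar> \<le> 1/(real n+1)" for n
    using x[of n] unfolding F_def by blast
  have h1: "(\<Sum>i\<in>{1..N}. x i) \<le> vN + 1/(real n+1)" "vN \<le> (\<Sum>i\<in>{1..N}. x i) + 1/(real n+1)" for n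
    using h[of n] by (simp_all add: abs_le_iff)
  have "(\<Sum>i\<in>{1..N}. x i) \<le> vN"
    using h1(1) by (intro le_lim) blast
  moreover have "vN \<le> (\<Sum>i\<in>{1..N}. x i)"
    using h1(2) by (intro le_lim) blast
  ultimately have s1: "(\<Sum>i\<in>{1..N}. x i) = vN" by simp
  have s2: "u T d \<le> (\<Sum>i\<in>T. x i)" if "T \<subset> {1..N}" "d \<in> D" for T d
  proof (rule le_lim, rule allI)
    fix n :: nat show "u T d \<le> (\<Sum>i\<in>T. x i) + 1/(real n+1)"
      using x[of n] that unfolding F_def by blast
  qed
  have s3: "(\<Sum>i\<in>S. x i) \<le> r'" using x[of 0] unfolding F_def by blast
  have "x \<in> scenario_core N u vN D" unfolding scenario_core_def using s1 s2 by blast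
  then show ?thesis using s3 r' by force
qed



lemma comp_meas:
  fixes K :: nat
  assumes meas_u: "\<forall>S. u S \<in> borel_measurable M" and k: "k < K"
  shows "(\<lambda>\<omega>. u T (\<omega> k)) \<in> borel_measurable (PiM {..<K} (\<lambda>_. M))"
  using measurable_comp[OF measurable_component_singleton[of k "{..<K}" "\<lambda>_. M"] meas_u[rule_format, of T]] k
  by (simp add: comp_def)

lemma apx_eq: "{\<omega> \<in> X. apx N u vN (\<omega> ` I) S n r' q} =
    {\<omega> \<in> X. (\<bar>(\<Sum>i\<in>{1..N}. q i) - vN\<bar> \<le> 1/(real n+1) \<and> (\<Sum>i\<in>S. q i) \<le> r') \<and>
       (\<forall>T\<in>{T. T \<subset> {1..N}}. \<forall>k\<in>I. u T (\<omega> k) \<le> (\<Sum>i\<in>T. q i) + 1/(real n+1))}"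
    unfolding apx_def by auto

lemma apx_meas:
  fixes K :: nat
  assumes meas_u: "\<forall>S. u S \<in> borel_measurable M" and I: "I \<subseteq> {..<K}"
  shows "{\<omega> \<in> space (PiM {..<K} (\<lambda>_. M)). apx N u vN (\<omega> ` I) S n r' q} \<in> sets (PiM {..<K} (\<lambda>_. M))"
proof -
  let ?P = "PiM {..<K} (\<lambda>_. M)"
  have fI: "finite I" by (rule finite_subset[OF I]) simp
  have fT: "finite {T. T \<subset> {1..N}}" by (rule finite_subset[of _ "Pow {1..N}"]) auto
  have eq: "{\<omega> \<in> space ?P. apx N u vN (\<omega> ` I) S n r' q} =
    {\<omega> \<in> space ?P. (\<bar>(\<Sum>i\<in>{1..N}. q i) - vN\<bar> \<le> 1/(real n+1) \<and> (\<Sum>i\<in>S. q i) \<le> r') \<and>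
       (\<forall>T\<in>{T. T \<subset> {1..N}}. \<forall>k\<in>I. u T (\<omega> k) \<le> (\<Sum>i\<in>T. q i) + 1/(real n+1))}"
    by (rule apx_eq)
  have p: "Measurable.pred ?P (\<lambda>\<omega>. u T (\<omega> k) \<le> c)" if "k \<in> I" for T k c
  proof -
    have "k < K" using I that by auto
    then show ?thesis unfolding pred_def
      by (rule borel_measurable_le[OF comp_meas[OF meas_u] borel_measurable_const])
  qed
  have "Measurable.pred ?P (\<lambda>\<omega>. \<forall>T\<in>{T. T \<subset> {1..N}}. \<forall>k\<in>I. u T (\<omega> k) \<le> (\<Sum>i\<in>T. q i) + 1/(real n+1))"
    by (intro pred_intros_finite(3)[OF fT] pred_intros_finite(3)[OF fI] p)
  then have h1: "{\<omega> \<in> space ?P. \<forall>T\<in>{T. T \<subset> {1..N}}. \<forall>k\<in>I. u T (\<omega> k) \<le> (\<Sum>i\<in>T. q i) + 1/(real n+1)} \<in> sets ?P"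
    unfolding pred_def .
  have h2: "{\<omega> \<in> space ?P. \<bar>(\<Sum>i\<in>{1..N}. q i) - vN\<bar> \<le> 1/(real n+1) \<and> (\<Sum>i\<in>S. q i) \<le> r'} \<in> sets ?P"
    by (rule sets.sets_Collect_const)
  have "{\<omega> \<in> space ?P. (\<bar>(\<Sum>i\<in>{1..N}. q i) - vN\<bar> \<le> 1/(real n+1) \<and> (\<Sum>i\<in>S. q i) \<le> r') \<and>
       (\<forall>T\<in>{T. T \<subset> {1..N}}. \<forall>k\<in>I. u T (\<omega> k) \<le> (\<Sum>i\<in>T. q i) + 1/(real n+1))} =
     {\<omega> \<in> space ?P. \<bar>(\<Sum>i\<in>{1..N}. q i) - vN\<bar> \<le> 1/(real n+1) \<and> (\<Sum>i\<in>S. q i) \<le> r'} \<inter>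
     {\<omega> \<in> space ?P. \<forall>T\<in>{T. T \<subset> {1..N}}. \<forall>k\<in>I. u T (\<omega> k) \<le> (\<Sum>i\<in>T. q i) + 1/(real n+1)}"
    by (auto simp del: Collect_conj_eq)
  show ?thesis unfolding eq \<open>_ = _ \<inter> _\<close> by (rule sets.Int[OF h2 h1])
qed


lemma Y_meas:
  fixes K :: nat
  assumes meas_u: "\<forall>S. u S \<in> borel_measurable M" and I: "I \<subseteq> {..<K}" and S: "S \<subseteq> {1..N}"
  shows "{\<omega> \<in> space (PiM {..<K} (\<lambda>_. M)). \<exists>x\<in>scenario_core N u vN (\<omega> ` I). (\<Sum>i\<in>S. x i) < r}
     \<in> sets (PiM {..<K} (\<lambda>_. M))"
proof (cases "I = {}")
  case True
  show ?thesis unfolding True image_empty by (rule sets.sets_Collect_const)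
next
  case False
  let ?P = "PiM {..<K} (\<lambda>_. M)"
  have eq: "{\<omega> \<in> space ?P. \<exists>x\<in>scenario_core N u vN (\<omega> ` I). (\<Sum>i\<in>S. x i) < r} =
     {\<omega> \<in> space ?P. \<exists>r'\<in>\<rat> \<inter> {..<r}. \<forall>n::nat. \<exists>q\<in>Qvec N. apx N u vN (\<omega> ` I) S n r' q}"
  proof (rule Collect_cong, rule conj_cong[OF refl], rule iffI)
    fix \<omega> assume "\<exists>x\<in>scenario_core N u vN (\<omega> ` I). (\<Sum>i\<in>S. x i) < r"
    then obtain x where "x \<in> scenario_core N u vN (\<omega> ` I)" "(\<Sum>i\<in>S. x i) < r" by blast
    from core_approx_fwd[OF this(1) S this(2)]
    obtain r' where "r' \<in> \<rat>" "r' < r" "\<forall>n::nat. \<exists>q\<in>Qvec N. apx N u vN (\<omega> ` I) S n r' q" by blast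
    then show "\<exists>r'\<in>\<rat> \<inter> {..<r}. \<forall>n::nat. \<exists>q\<in>Qvec N. apx N u vN (\<omega> ` I) S n r' q" by blast
  next
    fix \<omega> assume "\<exists>r'\<in>\<rat> \<inter> {..<r}. \<forall>n::nat. \<exists>q\<in>Qvec N. apx N u vN (\<omega> ` I) S n r' q"
    then obtain r' where r': "r' < r" "\<forall>n::nat. \<exists>q\<in>Qvec N. apx N u vN (\<omega> ` I) S n r' q" by blast
    obtain i0 where "i0 \<in> I" using False by blast
    then have "\<omega> i0 \<in> \<omega> ` I" by blast
    from core_approx_bwd[OF this r']
    show "\<exists>x\<in>scenario_core N u vN (\<omega> ` I). (\<Sum>i\<in>S. x i) < r" .
  qed
  have cQ: "countable (\<rat> \<inter> {..<r})" using countable_rat by (rule countable_subset[rotated]) auto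
  have m1: "{\<omega> \<in> space ?P. \<exists>q\<in>Qvec N. apx N u vN (\<omega> ` I) S n r' q} \<in> sets ?P" for n r'
    by (rule sets.sets_Collect_countable_Ex'[OF _ countable_Qvec]) (rule apx_meas[OF meas_u I])
  have m2: "{\<omega> \<in> space ?P. \<forall>n::nat. \<exists>q\<in>Qvec N. apx N u vN (\<omega> ` I) S n r' q} \<in> sets ?P" for r'
    by (rule sets.sets_Collect_countable_All) (rule m1)
  have "{\<omega> \<in> space ?P. \<exists>r'\<in>\<rat> \<inter> {..<r}. \<forall>n::nat. \<exists>q\<in>Qvec N. apx N u vN (\<omega> ` I) S n r' q} \<in> sets ?P"
    by (rule sets.sets_Collect_countable_Ex'[where P="\<lambda>r' \<omega>. \<forall>n::nat. \<exists>q\<in>Qvec N. apx N u vN (\<omega> ` I) S n r' q", OF m2 cQ])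
  then show ?thesis by (rule ssubst[OF eq, where P="\<lambda>X. X \<in> sets ?P"])
qed



definition viol :: "'d measure \<Rightarrow> nat \<Rightarrow> (nat set \<Rightarrow> 'd \<Rightarrow> real) \<Rightarrow> (nat \<Rightarrow> real) set \<Rightarrow> 'd set" where
  "viol M N u C = {d \<in> space M. \<exists>x\<in>C. \<exists>S. S \<subset> {1..N} \<and> (\<Sum>i\<in>S. x i) < u S d}"

lemma instability_viol: "instability M N u C = measure M (viol M N u C)"
  unfolding instability_def viol_def ..

lemma rat_between_iff:
  fixes a :: "'x \<Rightarrow> real"
  shows "(\<exists>x\<in>C. a x < v) \<longleftrightarrow> (\<exists>r\<in>\<rat>. (\<exists>x\<in>C. a x < r) \<and> r < v)"
proof
  assume "\<exists>x\<in>C. a x < v"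
  then obtain x where x: "x \<in> C" "a x < v" by blast
  obtain r where "r \<in> \<rat>" "a x < r" "r < v" using Rats_dense_in_real[OF x(2)] by blast
  then show "\<exists>r\<in>\<rat>. (\<exists>x\<in>C. a x < r) \<and> r < v" using x(1) by blast
next
  assume "\<exists>r\<in>\<rat>. (\<exists>x\<in>C. a x < r) \<and> r < v"
  then show "\<exists>x\<in>C. a x < v" by force
qed

lemma viol_alt: "viol M N u C = {d \<in> space M. \<exists>S\<in>{S. S \<subset> {1..N}}. \<exists>r\<in>\<rat>. (\<exists>x\<in>C. (\<Sum>i\<in>S. x i) < r) \<and> r < u S d}"
proof -
  have "(\<exists>x\<in>C. \<exists>S. S \<subset> {1..N} \<and> (\<Sum>i\<in>S. x i) < u S d) \<longleftrightarrow>
        (\<exists>S\<in>{S. S \<subset> {1..N}}. \<exists>x\<in>C. (\<Sum>i\<in>S. x i) < u S d)" for d by blast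
  also have "\<dots> d \<longleftrightarrow> (\<exists>S\<in>{S. S \<subset> {1..N}}. \<exists>r\<in>\<rat>. (\<exists>x\<in>C. (\<Sum>i\<in>S. x i) < r) \<and> r < u S d)" for d
    using rat_between_iff[of C "\<lambda>x. \<Sum>i\<in>_. x i"] by (meson rat_between_iff)
  finally show ?thesis unfolding viol_def by (intro Collect_cong conj_cong refl)
qed

lemma finite_psub: "finite {S. S \<subset> {1..(N::nat)}}"
  by (rule finite_subset[of _ "Pow {1..N}"]) auto

lemma viol_sets:
  assumes meas_u: "\<forall>S. u S \<in> borel_measurable M"
  shows "viol M N u C \<in> sets M"
proof -
  have c: "countable {S. S \<subset> {1..N}}" using finite_psub by (rule countable_finite)
  have m: "{d \<in> space M. (\<exists>x\<in>C. (\<Sum>i\<in>S. x i) < r) \<and> r < u S d} \<in> sets M" for S r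
  proof (cases "\<exists>x\<in>C. (\<Sum>i\<in>S. x i) < r")
    case True
    have "{d \<in> space M. r < u S d} \<in> sets M"
      using borel_measurable_less[OF borel_measurable_const meas_u[rule_format, of S]] by simp
    then show ?thesis using True by simp
  qed simp
  show ?thesis unfolding viol_alt
    by (rule sets.sets_Collect_countable_Ex'[OF _ c], rule sets.sets_Collect_countable_Ex'[OF _ countable_rat], rule m)
qed



lemma E_sets:
  fixes K :: nat and M :: "'d measure" and e :: real
  assumes P: "prob_space M" and meas_u: "\<forall>S. u S \<in> borel_measurable M" and I: "I \<subseteq> {..<K}"
  shows "{\<omega> \<in> space (PiM {..<K} (\<lambda>_. M)). e < instability M N u (scenario_core N u vN (\<omega> ` I)) \<and>
           (\<forall>k\<in>{..<K}-I. \<omega> k \<notin> viol M N u (scenario_core N u vN (\<omega> ` I)))} \<in> sets (PiM {..<K} (\<lambda>_. M))"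
proof -
  let ?P = "PiM {..<K} (\<lambda>_. M)"
  let ?C = "\<lambda>\<omega>. scenario_core N u vN (\<omega> ` I)"
  interpret sigma_finite_measure M using P by (rule prob_space_imp_sigma_finite)
  define Y where "Y S r = {\<omega> \<in> space ?P. \<exists>x\<in>?C \<omega>. (\<Sum>i\<in>S. x i) < r}" for S :: "nat set" and r :: real
  define R where "R = {p \<in> space (?P \<Otimes>\<^sub>M M). \<exists>S\<in>{S. S \<subset> {1..N}}. \<exists>r\<in>\<rat>. fst p \<in> Y S r \<and> r < u S (snd p)}"
  have Ys: "Y S r \<in> sets ?P" if "S \<subset> {1..N}" for S r
    unfolding Y_def by (rule Y_meas[OF meas_u I]) (use that in blast)
  have c: "countable {S. S \<subset> {1..N}}" using finite_psub by (rule countable_finite)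
  have Rs: "R \<in> sets (?P \<Otimes>\<^sub>M M)"
    unfolding R_def
  proof (rule sets.sets_Collect_countable_Ex'[OF _ c], rule sets.sets_Collect_countable_Ex'[OF _ countable_rat])
    fix S r assume "S \<in> {S. S \<subset> {1..N}}"
    then have [measurable]: "Y S r \<in> sets ?P" using Ys by blast
    have [measurable]: "u S \<in> borel_measurable M" using meas_u by blast
    have "Measurable.pred (?P \<Otimes>\<^sub>M M) (\<lambda>p. fst p \<in> Y S r \<and> r < u S (snd p))" by measurable
    then show "{p \<in> space (?P \<Otimes>\<^sub>M M). fst p \<in> Y S r \<and> r < u S (snd p)} \<in> sets (?P \<Otimes>\<^sub>M M)"
      unfolding pred_def .
  qed
  have sec: "Pair \<omega> -` R = viol M N u (?C \<omega>)" if w: "\<omega> \<in> space ?P" for \<omega>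
  proof -
    have "d \<in> Pair \<omega> -` R \<longleftrightarrow> d \<in> viol M N u (?C \<omega>)" for d
      unfolding viol_alt R_def Y_def using w by (auto simp: space_pair_measure)
    then show ?thesis by blast
  qed
  have Vm: "(\<lambda>\<omega>. enn2real (emeasure M (Pair \<omega> -` R))) \<in> borel_measurable ?P"
    using measurable_emeasure_Pair[OF Rs] by measurable
  have Veq: "instability M N u (?C \<omega>) = enn2real (emeasure M (Pair \<omega> -` R))" if "\<omega> \<in> space ?P" for \<omega>
    using sec[OF that] by (simp add: instability_viol measure_def)
  have pm: "(\<lambda>\<omega>. (\<omega>, \<omega> k)) \<in> measurable ?P (?P \<Otimes>\<^sub>M M)" if "k < K" for k
  proof -
    have k: "k \<in> {..<K}" using that by simp
    show ?thesis by (rule measurable_Pair[OF measurable_ident_sets[OF refl] measurable_component_singleton[OF k]])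
  qed
  have eq: "{\<omega> \<in> space ?P. e < instability M N u (?C \<omega>) \<and> (\<forall>k\<in>{..<K}-I. \<omega> k \<notin> viol M N u (?C \<omega>))} =
     {\<omega> \<in> space ?P. e < enn2real (emeasure M (Pair \<omega> -` R)) \<and> (\<forall>k\<in>{..<K}-I. (\<omega>, \<omega> k) \<notin> R)}"
  proof (rule Collect_cong)
    fix \<omega> show "(\<omega> \<in> space ?P \<and> e < instability M N u (?C \<omega>) \<and> (\<forall>k\<in>{..<K}-I. \<omega> k \<notin> viol M N u (?C \<omega>))) =
      (\<omega> \<in> space ?P \<and> e < enn2real (emeasure M (Pair \<omega> -` R)) \<and> (\<forall>k\<in>{..<K}-I. (\<omega>, \<omega> k) \<notin> R))"
      using Veq[of \<omega>] sec[of \<omega>] by auto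
  qed
  have p1: "Measurable.pred ?P (\<lambda>\<omega>. e < enn2real (emeasure M (Pair \<omega> -` R)))"
    using Vm by measurable
  have p2: "Measurable.pred ?P (\<lambda>\<omega>. (\<omega>, \<omega> k) \<notin> R)" if "k \<in> {..<K}-I" for k
  proof -
    have "Measurable.pred ?P (\<lambda>\<omega>. (\<omega>, \<omega> k) \<in> R)" using pred_sets2[OF Rs pm] that by simp
    then show ?thesis by (rule pred_intros_logic)
  qed
  have "Measurable.pred ?P (\<lambda>\<omega>. e < enn2real (emeasure M (Pair \<omega> -` R)) \<and> (\<forall>k\<in>{..<K}-I. (\<omega>, \<omega> k) \<notin> R))"
    using p1 pred_intros_finite(3)[of "{..<K}-I", OF _ p2] by measurable
  then show ?thesis unfolding eq pred_def .
qed



lemma E_bound: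
  fixes K :: nat and M :: "'d measure" and e :: real
  assumes P: "prob_space M" and meas_u: "\<forall>S. u S \<in> borel_measurable M" and I: "I \<subseteq> {..<K}"
    and e1: "e \<le> 1"
  shows "measure (PiM {..<K} (\<lambda>_. M)) {\<omega> \<in> space (PiM {..<K} (\<lambda>_. M)). e < instability M N u (scenario_core N u vN (\<omega> ` I)) \<and>
           (\<forall>k\<in>{..<K}-I. \<omega> k \<notin> viol M N u (scenario_core N u vN (\<omega> ` I)))} \<le> (1 - e) ^ (K - card I)"
proof -
  let ?P = "PiM {..<K} (\<lambda>_. M)"
  let ?C = "\<lambda>\<omega>. scenario_core N u vN (\<omega> ` I)"
  define J where "J = {..<K} - I"
  define E where "E = {\<omega> \<in> space ?P. e < instability M N u (?C \<omega>) \<and> (\<forall>k\<in>J. \<omega> k \<notin> viol M N u (?C \<omega>))}"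
  define c where "c = (1 - e) ^ (K - card I)"
  have c0: "0 \<le> c" using e1 by (simp add: c_def)
  interpret Mp: prob_space M by (rule P)
  interpret PS: product_sigma_finite "\<lambda>_::nat. M"
    by (unfold product_sigma_finite_def) (simp add: prob_space_imp_sigma_finite P)
  have Es: "E \<in> sets ?P" unfolding E_def J_def by (rule E_sets[OF P meas_u I])
  have IJ: "I \<inter> J = {}" "finite I" "finite J" "I \<union> J = {..<K}"
    using I by (auto simp: J_def intro: finite_subset)
  have cJ: "card J = K - card I" unfolding J_def using I by (simp add: card_Diff_subset finite_subset)
  have PIJ: "PiM (I \<union> J) (\<lambda>_. M) = ?P" using IJ(4) by simp
  have Bs: "viol M N u C \<in> sets M" for C by (rule viol_sets[OF meas_u])
  have inner: "(\<integral>\<^sup>+ y. indicator E (merge I J (x, y)) \<partial>PiM J (\<lambda>_. M)) \<le> ennreal c"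
    if x: "x \<in> space (PiM I (\<lambda>_. M))" for x
  proof -
    define B where "B = viol M N u (?C x)"
    define A where "A = (if e < instability M N u (?C x) then PiE J (\<lambda>_. space M - B) else {})"
    have Bs': "space M - B \<in> sets M" unfolding B_def by (rule sets.Diff[OF sets.top Bs])
    have As: "A \<in> sets (PiM J (\<lambda>_. M))"
      unfolding A_def using IJ(3) Bs' by (auto intro!: sets_PiM_I_finite)
    have ind: "indicator E (merge I J (x, y)) = (indicator A y :: ennreal)" if y: "y \<in> space (PiM J (\<lambda>_. M))" for y
    proof -
      have xy: "(x, y) \<in> space (PiM I (\<lambda>_. M) \<Otimes>\<^sub>M PiM J (\<lambda>_. M))" using x y by (simp add: space_pair_measure)
      have msp: "merge I J (x, y) \<in> space ?P"
        using measurable_space[OF measurable_merge xy] PIJ by simp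
      have img: "merge I J (x, y) ` I = x ` I" using IJ(1) by (auto simp: image_def)
      have mk: "merge I J (x, y) k = y k" if "k \<in> J" for k using IJ(1) that by simp
      have yJ: "\<forall>k\<in>J. y k \<in> space M" using y by (auto simp: space_PiM)
      have ext: "y \<in> PiE J (\<lambda>_. space M)" using y by (simp add: space_PiM)
      have "merge I J (x, y) \<in> E \<longleftrightarrow> y \<in> A"
        unfolding E_def A_def B_def using msp img mk yJ ext by (auto simp: PiE_iff)
      then show ?thesis by (simp add: indicator_def)
    qed
    have "(\<integral>\<^sup>+ y. indicator E (merge I J (x, y)) \<partial>PiM J (\<lambda>_. M)) = (\<integral>\<^sup>+ y. indicator A y \<partial>PiM J (\<lambda>_. M))"
      by (rule nn_integral_cong) (rule ind)
    also have "\<dots> = emeasure (PiM J (\<lambda>_. M)) A" using As by simp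
    also have "\<dots> \<le> ennreal c"
    proof (cases "e < instability M N u (?C x)")
      case True
      have V: "instability M N u (?C x) = measure M B" unfolding B_def by (rule instability_viol)
      have V1: "measure M B \<le> 1" by (rule Mp.prob_le_1)
      have "emeasure (PiM J (\<lambda>_. M)) A = (\<Prod>k\<in>J. emeasure M (space M - B))"
        unfolding A_def using True IJ(3) Bs' by (simp add: PS.emeasure_PiM)
      also have "\<dots> = (\<Prod>k\<in>J. ennreal (1 - measure M B))"
        using Mp.prob_compl[of B] Bs unfolding B_def by (simp add: Mp.emeasure_eq_measure)
      also have "\<dots> = ennreal ((1 - measure M B) ^ card J)"
        using V1 by (simp add: ennreal_power)
      also have "\<dots> \<le> ennreal c"
        unfolding c_def cJ[symmetric] using V1 True V
        by (intro ennreal_leI power_mono) auto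
      finally show ?thesis .
    qed (simp add: A_def)
    finally show ?thesis .
  qed
  have "emeasure ?P E = (\<integral>\<^sup>+ \<omega>. indicator E \<omega> \<partial>PiM (I \<union> J) (\<lambda>_. M))" using Es PIJ by simp
  also have "\<dots> = (\<integral>\<^sup>+ x. (\<integral>\<^sup>+ y. indicator E (merge I J (x, y)) \<partial>PiM J (\<lambda>_. M)) \<partial>PiM I (\<lambda>_. M))"
    by (rule PS.product_nn_integral_fold) (use IJ Es PIJ in auto)
  also have "\<dots> \<le> (\<integral>\<^sup>+ x. ennreal c \<partial>PiM I (\<lambda>_. M))"
    by (rule nn_integral_mono) (rule inner)
  also have "\<dots> = ennreal c"
  proof -
    interpret PI: prob_space "PiM I (\<lambda>_. M)" by (rule prob_space_PiM) (rule P)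
    show ?thesis by (simp add: PI.emeasure_space_1)
  qed
  finally have le: "emeasure ?P E \<le> ennreal c" .
  interpret PK: prob_space ?P by (rule prob_space_PiM) (rule P)
  have "measure ?P E \<le> c" using le c0 by (simp add: PK.emeasure_eq_measure)
  then show ?thesis unfolding E_def J_def c_def .
qed



lemma sum_subsets:
  fixes f :: "nat \<Rightarrow> real" and K :: nat
  shows "(\<Sum>I\<in>{I. I \<subseteq> {..<K} \<and> card I < K}. f (card I)) = (\<Sum>s=0..<K. real (K choose s) * f s)"
proof -
  have eq: "{I. I \<subseteq> {..<K} \<and> card I < K} = (\<Union>s\<in>{0..<K}. {I. I \<subseteq> {..<K} \<and> card I = s})" by auto
  have fin: "finite {I. I \<subseteq> {..<K} \<and> card I = s}" for s
    by (rule finite_subset[of _ "Pow {..<K}"]) auto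
  have "(\<Sum>I\<in>{I. I \<subseteq> {..<K} \<and> card I < K}. f (card I)) =
        (\<Sum>s\<in>{0..<K}. \<Sum>I\<in>{I. I \<subseteq> {..<K} \<and> card I = s}. f (card I))"
    unfolding eq by (rule sum.UNION_disjoint) (auto simp: fin)
  also have "\<dots> = (\<Sum>s=0..<K. real (K choose s) * f s)"
  proof (rule sum.cong[OF refl])
    fix s
    have "(\<Sum>I\<in>{I. I \<subseteq> {..<K} \<and> card I = s}. f (card I)) = (\<Sum>I\<in>{I. I \<subseteq> {..<K} \<and> card I = s}. f s)"
      by (rule sum.cong) auto
    also have "\<dots> = real (card {I. I \<subseteq> {..<K} \<and> card I = s}) * f s" by simp
    also have "card {I. I \<subseteq> {..<K} \<and> card I = s} = K choose s"
      using n_subsets[of "{..<K}" s] by simp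
    finally show "(\<Sum>I\<in>{I. I \<subseteq> {..<K} \<and> card I = s}. f (card I)) = real (K choose s) * f s" .
  qed
  finally show ?thesis .
qed

theorem theorem1:
  fixes M :: "'d measure" and N K :: nat and u :: "nat set \<Rightarrow> 'd \<Rightarrow> real"
    and vN :: real and \<beta> :: real and \<epsilon> :: "nat \<Rightarrow> real"
  assumes "prob_space M"
    and grand: "\<forall>d\<in>space M. u {1..N} d = vN"
    and meas_u: "\<forall>S. u S \<in> borel_measurable M"
    and nonempty: "\<forall>\<omega>\<in>space (PiM {..<K} (\<lambda>_. M)). scenario_core N u vN (\<omega> ` {..<K}) \<noteq> {}"
    and beta: "0 < \<beta>" "\<beta> < 1"
    and eps_range: "\<forall>s\<in>{0..K}. 0 \<le> \<epsilon> s \<and> \<epsilon> s \<le> 1"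
    and eps_K: "\<epsilon> K = 1"
    and eps_sum: "(\<Sum>s=0..<K. real (K choose s) * (1 - \<epsilon> s) ^ (K - s)) = \<beta>"
    and meas_event: "{\<omega> \<in> space (PiM {..<K} (\<lambda>_. M)).
        instability M N u (scenario_core N u vN (\<omega> ` {..<K}))
          > \<epsilon> (min_compression_card N u vN K \<omega>)} \<in> sets (PiM {..<K} (\<lambda>_. M))"
  shows "measure (PiM {..<K} (\<lambda>_. M))
      {\<omega> \<in> space (PiM {..<K} (\<lambda>_. M)).
        instability M N u (scenario_core N u vN (\<omega> ` {..<K}))
          > \<epsilon> (min_compression_card N u vN K \<omega>)} \<le> \<beta>"
proof -
  note P = \<open>prob_space M\<close>
  let ?P = "PiM {..<K} (\<lambda>_. M)"
  let ?core = "scenario_core N u vN"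
  define G where "G = {\<omega> \<in> space ?P. instability M N u (?core (\<omega> ` {..<K})) > \<epsilon> (min_compression_card N u vN K \<omega>)}"
  define II where "II = {I. I \<subseteq> {..<K} \<and> card I < K}"
  define E where "E I = {\<omega> \<in> space ?P. \<epsilon> (card I) < instability M N u (?core (\<omega> ` I)) \<and>
           (\<forall>k\<in>{..<K}-I. \<omega> k \<notin> viol M N u (?core (\<omega> ` I)))}" for I
  interpret Mp: prob_space M by (rule P)
  interpret PK: prob_space ?P by (rule prob_space_PiM) (rule P)
  have finII: "finite II" unfolding II_def by (rule finite_subset[of _ "Pow {..<K}"]) auto
  have Esets: "E I \<in> sets ?P" if "I \<in> II" for I
    unfolding E_def by (rule E_sets[OF P meas_u]) (use that in \<open>auto simp: II_def\<close>)
  have cover: "G \<subseteq> (\<Union>I\<in>II. E I)"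
  proof
    fix \<omega> assume w: "\<omega> \<in> G"
    define D where "D = \<omega> ` {..<K}"
    define Cs where "Cs = {card I | I. I \<subseteq> D \<and> ?core I = ?core D}"
    have s_def: "min_compression_card N u vN K \<omega> = Min Cs"
      unfolding min_compression_card_def Cs_def D_def ..
    have finCs: "finite Cs"
    proof (rule finite_subset)
      show "Cs \<subseteq> card ` Pow D" unfolding Cs_def by auto
      show "finite (card ` Pow D)" unfolding D_def by simp
    qed
    have "card D \<in> Cs" unfolding Cs_def by blast
    then have "Min Cs \<in> Cs" using finCs by (intro Min_in) auto
    then obtain I' where I': "Min Cs = card I'" "I' \<subseteq> D" "?core I' = ?core D"
      unfolding Cs_def by blast
    obtain I where I: "I \<subseteq> {..<K}" "inj_on \<omega> I" "I' = \<omega> ` I"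
      using I'(2) unfolding D_def subset_image_inj by blast
    have cI: "card I = min_compression_card N u vN K \<omega>"
      using I I'(1) s_def by (simp add: card_image)
    have coreI: "?core (\<omega> ` I) = ?core D" using I I'(3) by simp
    have wsp: "\<omega> \<in> space ?P" and gt: "\<epsilon> (card I) < instability M N u (?core D)"
      using w cI unfolding G_def D_def by auto
    have "instability M N u (?core D) \<le> 1"
      unfolding instability_viol by (rule Mp.prob_le_1)
    moreover have "card I \<le> K" using card_mono[OF _ I(1)] by simp
    ultimately have "card I < K" using gt eps_K by (cases "card I = K") auto
    then have III: "I \<in> II" using I(1) by (simp add: II_def)
    have "\<omega> k \<notin> viol M N u (?core (\<omega> ` I))" if k: "k \<in> {..<K} - I" for k
    proof
      assume "\<omega> k \<in> viol M N u (?core (\<omega> ` I))"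
      then obtain x S where x: "x \<in> ?core D" "S \<subset> {1..N}" "(\<Sum>i\<in>S. x i) < u S (\<omega> k)"
        unfolding viol_def coreI by blast
      have "\<omega> k \<in> D" using k unfolding D_def by blast
      then have "u S (\<omega> k) \<le> (\<Sum>i\<in>S. x i)" using x(1,2) unfolding scenario_core_def by blast
      then show False using x(3) by simp
    qed
    then have "\<omega> \<in> E I" unfolding E_def using wsp gt coreI by simp
    then show "\<omega> \<in> (\<Union>I\<in>II. E I)" using III by blast
  qed
  have Us: "(\<Union>I\<in>II. E I) \<in> sets ?P" using finII Esets by (intro sets.finite_UN) auto
  have "measure ?P G \<le> measure ?P (\<Union>I\<in>II. E I)"
    by (rule PK.finite_measure_mono[OF cover Us])
  also have "\<dots> \<le> (\<Sum>I\<in>II. measure ?P (E I))"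
    by (rule measure_UNION_le[OF finII Esets])
  also have "\<dots> \<le> (\<Sum>I\<in>II. (1 - \<epsilon> (card I)) ^ (K - card I))"
  proof (rule sum_mono)
    fix I assume "I \<in> II"
    then have I: "I \<subseteq> {..<K}" "card I < K" by (auto simp: II_def)
    have "\<epsilon> (card I) \<le> 1" using eps_range I(2) by auto
    then show "measure ?P (E I) \<le> (1 - \<epsilon> (card I)) ^ (K - card I)"
      unfolding E_def by (rule E_bound[OF P meas_u I(1)])
  qed
  also have "\<dots> = (\<Sum>s=0..<K. real (K choose s) * (1 - \<epsilon> s) ^ (K - s))"
    unfolding II_def by (rule sum_subsets[where f="\<lambda>s. (1 - \<epsilon> s) ^ (K - s)"])
  also have "\<dots> = \<beta>" by (rule eps_sum)
  finally show ?thesis unfolding G_def .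
qed

end
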